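(* If $\mathcal{F}$ is a finitary argumentation framework, then there exists a $\mathit{cf1.5}$ extension of $\mathcal{F}$, i.e., $\mathit{cf1.5}(\mathcal{F})\neq\emptyset$.
   Context: An argumentation framework (AF) is $\mathcal{F}=(A_{\mathcal{F}},R_{\mathcal{F}})$ with $R_{\mathcal{F}}\subseteq A_{\mathcal{F}}\times A_{\mathcal{F}}$ (possibly infinite); $a\rightarrow b$ means $(a,b)\in R_{\mathcal{F}}$. $\mathcal{F}$ is finitary if each argument is attacked by only finitely many arguments. $\mathcal{F}|_S=(A_{\mathcal{F}}\cap S,R_{\mathcal{F}}\cap(S\times S))$. $S$ is conflict-free if no $a,b\in S$ have $a\rightarrow b$; a naive extension is a $\subseteq$-maximal conflict-free set. $\mathrm{SCC}(\mathcal{F})$ is the set of strongly connected components of the attack graph (where $b$ is in the component of $a$ iff there are directed attack paths, possibly of length 0, from $a$ to $b$ and from $b$ to $a$). For $X,S\subseteq A_{\mathcal{F}}$, $D_S(X)=\{b\in X:\exists a\in S\setminus X,\ a\rightarrow b\}$. $S\in\mathit{cf1.5}(\mathcal{F})$ iff $S$ is conflict-free and for each $X\in\mathrm{SCC}(\mathcal{F})$, $S\cap X$ is a naive extension of $\mathcal{F}|_{X\setminus D_S(X)}$. *)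

theory Defs
  imports Main
begin

text \<open>An argumentation framework: a set of arguments A and an attack relation R
  with R a subset of A x A. (a,b) in R means a attacks b.\<close>

definition AF :: "'a set \<Rightarrow> ('a \<times> 'a) set \<Rightarrow> bool" where
  "AF A R \<longleftrightarrow> R \<subseteq> A \<times> A"

definition finitary :: "'a set \<Rightarrow> ('a \<times> 'a) set \<Rightarrow> bool" where
  "finitary A R \<longleftrightarrow> (\<forall>b\<in>A. finite {a\<in>A. (a, b) \<in> R})"

definition restrict_args :: "'a set \<Rightarrow> 'a set \<Rightarrow> 'a set" where
  "restrict_args A S = A \<inter> S"

definition restrict_att :: "('a \<times> 'a) set \<Rightarrow> 'a set \<Rightarrow> ('a \<times> 'a) set" where
  "restrict_att R S = R \<inter> (S \<times> S)"

definition conflict_free :: "'a set \<Rightarrow> ('a \<times> 'a) set \<Rightarrow> 'a set \<Rightarrow> bool" where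
  "conflict_free A R S \<longleftrightarrow> S \<subseteq> A \<and> (\<forall>a\<in>S. \<forall>b\<in>S. (a, b) \<notin> R)"

definition naive :: "'a set \<Rightarrow> ('a \<times> 'a) set \<Rightarrow> 'a set \<Rightarrow> bool" where
  "naive A R S \<longleftrightarrow> conflict_free A R S \<and>
     (\<forall>T. conflict_free A R T \<longrightarrow> S \<subseteq> T \<longrightarrow> T = S)"

definition scc_of :: "'a set \<Rightarrow> ('a \<times> 'a) set \<Rightarrow> 'a \<Rightarrow> 'a set" where
  "scc_of A R a = {b\<in>A. (a, b) \<in> R\<^sup>* \<and> (b, a) \<in> R\<^sup>*}"

definition SCCs :: "'a set \<Rightarrow> ('a \<times> 'a) set \<Rightarrow> 'a set set" where
  "SCCs A R = scc_of A R ` A"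

definition D :: "('a \<times> 'a) set \<Rightarrow> 'a set \<Rightarrow> 'a set \<Rightarrow> 'a set" where
  "D R S X = {b\<in>X. \<exists>a\<in>S - X. (a, b) \<in> R}"

definition cf15 :: "'a set \<Rightarrow> ('a \<times> 'a) set \<Rightarrow> 'a set \<Rightarrow> bool" where
  "cf15 A R S \<longleftrightarrow> conflict_free A R S \<and>
     (\<forall>X\<in>SCCs A R. naive (restrict_args A (X - D R S X)) (restrict_att R (X - D R S X)) (S \<inter> X))"

end

theory Submission
  imports Defs "HOL-Analysis.Analysis"
begin

lemma clause_compact:
  fixes Pos Neg :: "'i \<Rightarrow> 'a set" and I :: "'i set"
  assumes fin: "\<forall>i\<in>I. finite (Pos i) \<and> finite (Neg i)"
    and sat: "\<forall>J. J \<subseteq> I \<and> finite J \<longrightarrow> (\<exists>f. \<forall>i\<in>J. (\<exists>v\<in>Pos i. f v) \<or> (\<exists>v\<in>Neg i. \<not> f v))"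
  shows "\<exists>f. \<forall>i\<in>I. (\<exists>v\<in>Pos i. f v) \<or> (\<exists>v\<in>Neg i. \<not> f v)"
proof -
  define X where "X = product_topology (\<lambda>_::'a. discrete_topology (UNIV::bool set)) UNIV"
  have top: "topspace X = UNIV" unfolding X_def by (simp add: PiE_UNIV_domain)
  have cs: "compact_space X" unfolding X_def
    by (simp add: compact_space_product_topology compact_space_discrete_topology)
  have coord: "closedin X {f. f v = b}" for v b
  proof -
    have cm: "continuous_map X (discrete_topology UNIV) (\<lambda>x. x v)"
      unfolding X_def using continuous_map_product_projection[of v UNIV "\<lambda>_::'a. discrete_topology (UNIV::bool set)"] by simp
    have "closedin X {x \<in> topspace X. x v \<in> {b}}"
      by (rule closedin_continuous_map_preimage[OF cm]) simp
    then show ?thesis by (simp add: top)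
  qed
  have coordT: "closedin X {f. f v}" for v using coord[of v True] by simp
  have coordF: "closedin X {f. \<not> f v}" for v using coord[of v False] by simp
  define C where "C i = {f. (\<exists>v\<in>Pos i. f v) \<or> (\<exists>v\<in>Neg i. \<not> f v)}" for i
  have Ceq: "C i = (\<Union>v\<in>Pos i. {f. f v = True}) \<union> (\<Union>v\<in>Neg i. {f. f v = False})" for i
    unfolding C_def by auto
  have closed: "closedin X (C i)" if "i \<in> I" for i
    unfolding Ceq using fin that coordT coordF by (intro closedin_Un closedin_Union) auto
  have h1: "\<forall>c\<in>C ` I. closedin X c" using closed by auto
  have h2: "\<forall>F. finite F \<and> F \<subseteq> C ` I \<longrightarrow> \<Inter> F \<noteq> {}"
  proof (intro allI impI)
    fix F assume F: "finite F \<and> F \<subseteq> C ` I"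
    have "\<exists>J\<subseteq>I. finite J \<and> F = C ` J"
      using finite_subset_image[of F C I] F by simp
    then obtain J where J: "J \<subseteq> I" "finite J" "F = C ` J" by blast
    obtain f where "\<forall>i\<in>J. (\<exists>v\<in>Pos i. f v) \<or> (\<exists>v\<in>Neg i. \<not> f v)"
      using sat[rule_format, OF conjI[OF J(1) J(2)]] by (elim exE)
    then have "f \<in> \<Inter> F" using J unfolding C_def by auto
    then show "\<Inter> F \<noteq> {}" by auto
  qed
  have "\<Inter> (C ` I) \<noteq> {}"
    using cs[unfolded compact_space_fip, rule_format, of "C ` I"] h1 h2 by simp
  then show ?thesis unfolding C_def by auto
qed

lemma scc_eq:
  assumes "a \<in> scc_of A R x"
  shows "scc_of A R a = scc_of A R x"
  using assms unfolding scc_of_def by (auto intro: rtrancl_trans)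

lemma scc_self: "a \<in> A \<Longrightarrow> a \<in> scc_of A R a"
  unfolding scc_of_def by auto

lemma finite_att:
  assumes "AF A R" "finitary A R"
  shows "finite {c. (c, a) \<in> R}"
proof (cases "a \<in> A")
  case True
  have "{c. (c, a) \<in> R} = {c\<in>A. (c, a) \<in> R}" using assms(1) unfolding AF_def by auto
  then show ?thesis using assms(2) True unfolding finitary_def by simp
next
  case False
  then have "{c. (c, a) \<in> R} = {}" using assms(1) unfolding AF_def by auto
  then show ?thesis by simp
qed

lemma countable_anc:
  assumes "AF A R" "finitary A R"
  shows "countable {b. (b, a) \<in> R\<^sup>*}"
proof -
  have fin: "finite {b. (b, a) \<in> R ^^ n}" for n
  proof (induction n)
    case 0
    then show ?case by simp
  next
    case (Suc n)
    have "{b. (b, a) \<in> R ^^ Suc n} \<subseteq> (\<Union>c\<in>{b. (b, a) \<in> R ^^ n}. {b. (b, c) \<in> R})"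
      by (blast dest: relpow_Suc_D2)
    moreover have "finite (\<Union>c\<in>{b. (b, a) \<in> R ^^ n}. {b. (b, c) \<in> R})"
      using Suc finite_att[OF assms] by blast
    ultimately show ?case by (rule finite_subset)
  qed
  have "{b. (b, a) \<in> R\<^sup>*} = (\<Union>n. {b. (b, a) \<in> R ^^ n})"
    by (auto simp: rtrancl_power)
  then show ?thesis using fin by (simp add: countable_finite)
qed

definition rk :: "'a set \<Rightarrow> ('a \<times> 'a) set \<Rightarrow> 'a \<Rightarrow> nat" where
  "rk A R a = to_nat_on (scc_of A R a) a"

lemma countable_scc:
  assumes "AF A R" "finitary A R"
  shows "countable (scc_of A R a)"
proof -
  have "scc_of A R a \<subseteq> {b. (b, a) \<in> R\<^sup>*}" unfolding scc_of_def by auto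
  then show ?thesis using countable_anc[OF assms] countable_subset by blast
qed

lemma rk_inj:
  assumes "AF A R" "finitary A R" "x \<in> scc_of A R a" "y \<in> scc_of A R a" "rk A R x = rk A R y"
  shows "x = y"
proof -
  have "rk A R x = to_nat_on (scc_of A R a) x" "rk A R y = to_nat_on (scc_of A R a) y"
    unfolding rk_def using scc_eq assms(3,4) by metis+
  then show ?thesis using inj_on_to_nat_on[OF countable_scc[OF assms(1,2)]] assms(3-5)
    unfolding inj_on_def by metis
qed

definition W :: "'a set \<Rightarrow> ('a \<times> 'a) set \<Rightarrow> 'a \<Rightarrow> 'a set" where
  "W A R a = {b \<in> scc_of A R a. rk A R b < rk A R a \<and> (a, b) \<in> R}"

lemma finite_W:
  assumes "AF A R" "finitary A R"
  shows "finite (W A R a)"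
proof -
  have inj: "inj_on (rk A R) (scc_of A R a)"
    using rk_inj[OF assms] unfolding inj_on_def by blast
  have "rk A R ` W A R a \<subseteq> {..<rk A R a}" unfolding W_def by auto
  then have "finite (rk A R ` W A R a)" using finite_subset by blast
  moreover have "inj_on (rk A R) (W A R a)" using inj unfolding W_def
    by (rule inj_on_subset) auto
  ultimately show ?thesis using finite_imageD by blast
qed

lemma finite_construction:
  assumes "AF A R" "finitary A R" "finite G" "G \<subseteq> A"
  shows "\<exists>S\<subseteq>G. (\<forall>x\<in>S. \<forall>y\<in>S. (x, y) \<notin> R) \<and>
     (\<forall>a\<in>G - S. (a, a) \<in> R \<or> (\<exists>c\<in>S. (c, a) \<in> R) \<or> (\<exists>b\<in>S. b \<in> W A R a))"
  using assms(3,4)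
proof (induction G rule: finite_remove_induct)
  case empty
  then show ?case by auto
next
  case (remove G)
  define f where "f y = card {z\<in>G. (y, z) \<in> R\<^sup>*}" for y
  obtain x0 where "x0 \<in> G" using remove.hyps(2) by blast
  then obtain m0 where m0: "m0 \<in> G" "\<forall>y\<in>G. f m0 \<le> f y"
    using ex_has_least_nat[of "\<lambda>y. y \<in> G" x0 f] by blast
  have m0max: "(y, m0) \<in> R\<^sup>*" if "y \<in> G" "(m0, y) \<in> R\<^sup>*" for y
  proof (rule ccontr)
    assume nr: "(y, m0) \<notin> R\<^sup>*"
    have "{z\<in>G. (y, z) \<in> R\<^sup>*} \<subset> {z\<in>G. (m0, z) \<in> R\<^sup>*}"
      using that nr m0(1) by (auto intro: rtrancl_trans)
    then have "f y < f m0" unfolding f_def using remove.hyps(1) by (simp add: psubset_card_mono)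
    then show False using m0(2) that(1) by fastforce
  qed
  define M where "M = {x\<in>G. (m0, x) \<in> R\<^sup>* \<and> (x, m0) \<in> R\<^sup>*}"
  have "m0 \<in> M" "finite M" using m0(1) remove.hyps(1) unfolding M_def by auto
  then have "Max (rk A R ` M) \<in> rk A R ` M" by (intro Max_in) auto
  then obtain m where m: "m \<in> M" "rk A R m = Max (rk A R ` M)" by auto
  have mG: "m \<in> G" using m(1) unfolding M_def by auto
  have mmax: "(y, m) \<in> R\<^sup>*" if "y \<in> G" "(m, y) \<in> R\<^sup>*" for y
  proof -
    have a1: "(m0, m) \<in> R\<^sup>*" "(m, m0) \<in> R\<^sup>*" using m(1) unfolding M_def by auto
    have "(m0, y) \<in> R\<^sup>*" using a1(1) that(2) by (rule rtrancl_trans)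
    then have "(y, m0) \<in> R\<^sup>*" using m0max that(1) by blast
    then show ?thesis using a1(1) by (rule rtrancl_trans)
  qed
  have mrk: "rk A R y \<le> rk A R m" if "y \<in> G" "(m, y) \<in> R\<^sup>*" "(y, m) \<in> R\<^sup>*" for y
  proof -
    have "y \<in> M" using m(1) that unfolding M_def by (auto intro: rtrancl_trans)
    then show ?thesis using m(2) \<open>finite M\<close> by simp
  qed
  obtain S' where S': "S' \<subseteq> G - {m}" "\<forall>x\<in>S'. \<forall>y\<in>S'. (x, y) \<notin> R"
    "\<forall>a\<in>G - {m} - S'. (a, a) \<in> R \<or> (\<exists>c\<in>S'. (c, a) \<in> R) \<or> (\<exists>b\<in>S'. b \<in> W A R a)"
    using remove.IH[OF mG] remove.prems by blast
  show ?case
  proof (cases "(m, m) \<notin> R \<and> (\<forall>x\<in>S'. (x, m) \<notin> R \<and> (m, x) \<notin> R)")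
    case True
    show ?thesis
      by (rule exI[of _ "insert m S'"]) (use True S' mG in auto)
  next
    case False
    have "(m, m) \<in> R \<or> (\<exists>c\<in>S'. (c, m) \<in> R) \<or> (\<exists>b\<in>S'. b \<in> W A R m)"
    proof (cases "(m, m) \<in> R \<or> (\<exists>c\<in>S'. (c, m) \<in> R)")
      case True
      then show ?thesis by blast
    next
      case F2: False
      then obtain x where x: "x \<in> S'" "(m, x) \<in> R" using False by blast
      have xG: "x \<in> G" "x \<noteq> m" using x S'(1) by auto
      have r1: "(m, x) \<in> R\<^sup>*" using x by auto
      have r2: "(x, m) \<in> R\<^sup>*" using mmax xG r1 by blast
      have xA: "x \<in> A" "m \<in> A" using xG mG remove.prems by auto
      have xs: "x \<in> scc_of A R m" using r1 r2 xA unfolding scc_of_def by auto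
      have "rk A R x \<le> rk A R m" using mrk xG r1 r2 by blast
      moreover have "rk A R x \<noteq> rk A R m"
        using rk_inj[OF assms(1,2) xs scc_self[OF xA(2)]] xG by blast
      ultimately have "x \<in> W A R m" using xs x unfolding W_def by auto
      then show ?thesis using x by blast
    qed
    then show ?thesis
      by (intro exI[of _ S']) (use S' in auto)
  qed
qed

lemma cf15_intro:
  assumes "AF A R" "S \<subseteq> A" "\<forall>x\<in>S. \<forall>y\<in>S. (x, y) \<notin> R"
    "\<forall>a\<in>A - S. (a, a) \<in> R \<or> (\<exists>c\<in>S. (c, a) \<in> R) \<or> (\<exists>b\<in>S. b \<in> scc_of A R a \<and> (a, b) \<in> R)"
  shows "cf15 A R S"
  unfolding cf15_def
proof (intro conjI ballI)
  show "conflict_free A R S" using assms(2,3) unfolding conflict_free_def by auto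
  fix X assume "X \<in> SCCs A R"
  then obtain x0 where x0: "x0 \<in> A" "X = scc_of A R x0" unfolding SCCs_def by auto
  have XA: "X \<subseteq> A" using x0 unfolding scc_of_def by auto
  define Y where "Y = X - D R S X"
  have YA: "restrict_args A Y = Y" unfolding restrict_args_def Y_def using XA by auto
  have SXY: "S \<inter> X \<subseteq> Y" unfolding Y_def D_def using assms(3) by auto
  show "naive (restrict_args A (X - D R S X)) (restrict_att R (X - D R S X)) (S \<inter> X)"
    unfolding Y_def[symmetric] YA naive_def
  proof (intro conjI allI impI)
    show "conflict_free Y (restrict_att R Y) (S \<inter> X)"
      using SXY assms(3) unfolding conflict_free_def restrict_att_def by auto
    fix T assume T: "conflict_free Y (restrict_att R Y) T" "S \<inter> X \<subseteq> T"
    show "T = S \<inter> X"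
    proof (rule ccontr)
      assume "T \<noteq> S \<inter> X"
      then obtain a where a: "a \<in> T" "a \<notin> S \<inter> X" using T(2) by blast
      have aY: "a \<in> Y" using a T(1) unfolding conflict_free_def by auto
      have aX: "a \<in> X" using aY unfolding Y_def by auto
      have aS: "a \<notin> S" using a aX by auto
      have Tcf: "\<forall>u\<in>T. \<forall>v\<in>T. (u, v) \<notin> R" using T(1) unfolding conflict_free_def restrict_att_def by auto
      have sccA: "scc_of A R a = X" using scc_eq aX x0(2) by metis
      consider "(a, a) \<in> R" | c where "c \<in> S" "(c, a) \<in> R"
        | b where "b \<in> S" "b \<in> scc_of A R a" "(a, b) \<in> R"
        using assms(4) aS aX XA by blast
      then show False
      proof cases
        case 1 then show ?thesis using Tcf a(1) by blast
      next
        case (2 c)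
        show ?thesis
        proof (cases "c \<in> X")
          case True then show ?thesis using 2 T(2) Tcf a(1) by blast
        next
          case False
          then have "a \<in> D R S X" unfolding D_def using 2 aX by auto
          then show ?thesis using aY unfolding Y_def by auto
        qed
      next
        case (3 b)
        then show ?thesis using sccA T(2) Tcf a(1) by blast
      qed
    qed
  qed
qed


theorem theorem4:
  fixes A :: "'a set" and R :: "('a \<times> 'a) set"
  assumes "AF A R" and "finitary A R"
  shows "\<exists>S. cf15 A R S"
proof -
  define I :: "('a + 'a \<times> 'a) set" where "I = Inl ` {a\<in>A. (a, a) \<notin> R} \<union> Inr ` R"
  define Pos :: "'a + 'a \<times> 'a \<Rightarrow> 'a set" where
    "Pos = case_sum (\<lambda>a. insert a ({c. (c, a) \<in> R} \<union> W A R a)) (\<lambda>_. {})"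
  define Neg :: "'a + 'a \<times> 'a \<Rightarrow> 'a set" where
    "Neg = case_sum (\<lambda>_. {}) (\<lambda>p. {fst p, snd p})"
  have fin: "\<forall>i\<in>I. finite (Pos i) \<and> finite (Neg i)"
    unfolding I_def Pos_def Neg_def using finite_att[OF assms] finite_W[OF assms] by auto
  have sat: "\<forall>J. J \<subseteq> I \<and> finite J \<longrightarrow> (\<exists>f. \<forall>i\<in>J. (\<exists>v\<in>Pos i. f v) \<or> (\<exists>v\<in>Neg i. \<not> f v))"
  proof (intro allI impI)
    fix J assume J: "J \<subseteq> I \<and> finite J"
    define G where "G = Inl -` J"
    have "finite G" unfolding G_def using J by (auto intro: finite_vimageI)
    moreover have "G \<subseteq> A"
    proof
      fix a assume "a \<in> G"
      then have "Inl a \<in> I" unfolding G_def using J by auto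
      then show "a \<in> A" unfolding I_def by auto
    qed
    ultimately have "\<exists>S\<subseteq>G. (\<forall>x\<in>S. \<forall>y\<in>S. (x, y) \<notin> R) \<and>
     (\<forall>a\<in>G - S. (a, a) \<in> R \<or> (\<exists>c\<in>S. (c, a) \<in> R) \<or> (\<exists>b\<in>S. b \<in> W A R a))"
      by (rule finite_construction[OF assms])
    then obtain S where S: "S \<subseteq> G" "\<forall>x\<in>S. \<forall>y\<in>S. (x, y) \<notin> R"
      "\<forall>a\<in>G - S. (a, a) \<in> R \<or> (\<exists>c\<in>S. (c, a) \<in> R) \<or> (\<exists>b\<in>S. b \<in> W A R a)"
      by (elim exE conjE) (rule that)
    show "\<exists>f. \<forall>i\<in>J. (\<exists>v\<in>Pos i. f v) \<or> (\<exists>v\<in>Neg i. \<not> f v)"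
    proof (rule exI[of _ "\<lambda>v. v \<in> S"], intro ballI)
      fix i assume i: "i \<in> J"
      show "(\<exists>v\<in>Pos i. v \<in> S) \<or> (\<exists>v\<in>Neg i. v \<notin> S)"
      proof (cases i)
        case (Inl a)
        have aG: "a \<in> G" using i Inl unfolding G_def by auto
        have na: "(a, a) \<notin> R" using i J Inl unfolding I_def by auto
        show ?thesis using S(3) aG na unfolding Pos_def Inl by auto
      next
        case (Inr p)
        then have "p \<in> R" using i J unfolding I_def by auto
        then show ?thesis using S(2) unfolding Neg_def Inr by (cases p) auto
      qed
    qed
  qed
  obtain f where f: "\<forall>i\<in>I. (\<exists>v\<in>Pos i. f v) \<or> (\<exists>v\<in>Neg i. \<not> f v)"
    using clause_compact[OF fin sat] by blast
  define S where "S = {x\<in>A. f x}"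
  have RA: "R \<subseteq> A \<times> A" using assms(1) unfolding AF_def .
  have "cf15 A R S"
  proof (rule cf15_intro[OF assms(1)])
    show "S \<subseteq> A" unfolding S_def by auto
    show "\<forall>x\<in>S. \<forall>y\<in>S. (x, y) \<notin> R"
    proof (intro ballI)
      fix x y assume "x \<in> S" "y \<in> S"
      show "(x, y) \<notin> R"
      proof
        assume xy: "(x, y) \<in> R"
        then have "Inr (x, y) \<in> I" unfolding I_def by auto
        then have "(\<exists>v\<in>Pos (Inr (x, y)). f v) \<or> (\<exists>v\<in>Neg (Inr (x, y)). \<not> f v)" using f by blast
        then show False using \<open>x \<in> S\<close> \<open>y \<in> S\<close> unfolding S_def Pos_def Neg_def by simp
      qed
    qed
    show "\<forall>a\<in>A - S. (a, a) \<in> R \<or> (\<exists>c\<in>S. (c, a) \<in> R) \<or> (\<exists>b\<in>S. b \<in> scc_of A R a \<and> (a, b) \<in> R)"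
    proof
      fix a assume a: "a \<in> A - S"
      show "(a, a) \<in> R \<or> (\<exists>c\<in>S. (c, a) \<in> R) \<or> (\<exists>b\<in>S. b \<in> scc_of A R a \<and> (a, b) \<in> R)"
      proof (cases "(a, a) \<in> R")
        case False
        then have "Inl a \<in> I" using a unfolding I_def by auto
        then have "\<exists>v\<in>insert a ({c. (c, a) \<in> R} \<union> W A R a). f v"
        proof -
          have "(\<exists>v\<in>Pos (Inl a). f v) \<or> (\<exists>v\<in>Neg (Inl a). \<not> f v)" using f \<open>Inl a \<in> I\<close> by blast
          then show ?thesis unfolding Pos_def Neg_def by simp
        qed
        moreover have "W A R a \<subseteq> A" unfolding W_def scc_of_def by auto
        ultimately show ?thesis using a RA unfolding S_def W_def by auto
      qed simp
    qed
  qed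
  then show ?thesis by blast
qed

end
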